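(* Let $G$ be a group and let $V$ be a finite-dimensional vector space. Let $\tau\in\mathrm{LNUCA}_c(G,V)$ be stably injective. Then there exists $\sigma\in\mathrm{LNUCA}_c(G,V)$ such that $\sigma\circ\tau=\mathrm{Id}$.
   Context: For $g\in G$ and $x\in V^G$, $(gx)(h)=x(g^{-1}h)$. For finite $M\subset G$, $S=\mathcal{L}(V^M,V)$ and $s\in S^G$, $\sigma_s\colon V^G\to V^G$ is $\sigma_s(x)(g)=s(g)((g^{-1}x)\vert_M)$. $\mathrm{LNUCA}_c(G,V)$ is the set of maps $\sigma_s$ with $M$ finite and $s\in S^G$ constant outside some finite subset of $G$. For $s\in S^G$, $\Sigma(s)$ is the closure of $\{gs:g\in G\}$ in $S^G$ for the prodiscrete topology. $\tau=\sigma_s$ is stably injective if $\sigma_p$ is injective for every $p\in\Sigma(s)$. *)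

theory Defs
  imports Main "HOL.Vector_Spaces" "HOL-Library.Function_Algebras"
begin

text \<open>The group G is a type 'g of class group_add (not necessarily
commutative); g^-1 h is written -g + h.\<close>

definition fscale :: "('k \<Rightarrow> 'v \<Rightarrow> 'v) \<Rightarrow> 'k \<Rightarrow> ('g \<Rightarrow> 'v) \<Rightarrow> ('g \<Rightarrow> 'v)" where
  "fscale scale a y = (\<lambda>h. scale a (y h))"

definition gact :: "'g::group_add \<Rightarrow> ('g \<Rightarrow> 'b) \<Rightarrow> ('g \<Rightarrow> 'b)" where
  "gact g x = (\<lambda>h. x (- g + h))"

text \<open>Restriction to M, with V^M identified with functions vanishing outside M.\<close>
definition restr :: "'g set \<Rightarrow> ('g \<Rightarrow> 'v::zero) \<Rightarrow> ('g \<Rightarrow> 'v)" where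
  "restr M y = (\<lambda>h. if h \<in> M then y h else 0)"

text \<open>S = L(V^M, V): linear maps V^M -> V, represented as linear maps on V^G
that only depend on the restriction to M (this is a bijective representation).\<close>
definition linmaps :: "('k::field \<Rightarrow> 'v::ab_group_add \<Rightarrow> 'v) \<Rightarrow> 'g set \<Rightarrow> (('g \<Rightarrow> 'v) \<Rightarrow> 'v) set" where
  "linmaps scale M = {c. Vector_Spaces.linear (fscale scale) scale c \<and> (\<forall>y. c y = c (restr M y))}"

definition sigma :: "'g::group_add set \<Rightarrow> ('g \<Rightarrow> ('g \<Rightarrow> 'v::zero) \<Rightarrow> 'v) \<Rightarrow> ('g \<Rightarrow> 'v) \<Rightarrow> ('g \<Rightarrow> 'v)" where
  "sigma M s x = (\<lambda>g. s g (restr M (gact (- g) x)))"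

definition ev_const :: "('g \<Rightarrow> 'a) \<Rightarrow> bool" where
  "ev_const s \<longleftrightarrow> (\<exists>F c. finite F \<and> (\<forall>g. g \<notin> F \<longrightarrow> s g = c))"

definition LNUCA_c :: "('k::field \<Rightarrow> 'v::ab_group_add \<Rightarrow> 'v) \<Rightarrow> (('g::group_add \<Rightarrow> 'v) \<Rightarrow> ('g \<Rightarrow> 'v)) set" where
  "LNUCA_c scale = {\<tau>. \<exists>M s. finite M \<and> (\<forall>g. s g \<in> linmaps scale M) \<and> ev_const s \<and> \<tau> = sigma M s}"

text \<open>Orbit closure of s in S^G for the prodiscrete topology.\<close>
definition orbit_closure :: "('g::group_add \<Rightarrow> 'a) \<Rightarrow> ('g \<Rightarrow> 'a) set" where
  "orbit_closure s = {p. \<forall>F. finite F \<longrightarrow> (\<exists>g. \<forall>h\<in>F. p h = gact g s h)}"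

definition stably_injective :: "('k::field \<Rightarrow> 'v::ab_group_add \<Rightarrow> 'v) \<Rightarrow> (('g::group_add \<Rightarrow> 'v) \<Rightarrow> ('g \<Rightarrow> 'v)) \<Rightarrow> bool" where
  "stably_injective scale \<tau> \<longleftrightarrow> (\<exists>M s. finite M \<and> (\<forall>g. s g \<in> linmaps scale M) \<and> ev_const s
     \<and> \<tau> = sigma M s \<and> (\<forall>p\<in>orbit_closure s. inj (sigma M p)))"

end

theory Submission
  imports Defs
begin

context finite_dimensional_vector_space
begin

lemma ker_local:
  fixes T :: "('g::group_add \<Rightarrow> 'b) \<Rightarrow> ('g \<Rightarrow> 'b)" and M :: "'g set" and g0 :: 'g
  assumes add: "\<And>x y n. T (x + y) n = T x n + T y n"
    and scl: "\<And>a x n. T (\<lambda>h. a *s x h) n = a *s T x n"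
    and loc: "\<And>x y g. (\<forall>m\<in>M. x (g+m) = y (g+m)) \<Longrightarrow> T x g = T y g"
    and fM: "finite M" and inj: "inj T"
  shows "\<exists>N. finite N \<and> (\<forall>x. (\<forall>n\<in>N. T x n = 0) \<longrightarrow> x g0 = 0)"
proof (rule ccontr)
  assume fail: "\<not> ?thesis"
  have T0: "T 0 n = 0" for n using add[of 0 0 n] by simp
  have Tdiff: "T (x - y) n = T x n - T y n" for x y n
    using add[of "x - y" y n] by (simp add: algebra_simps)
  define good where "good R \<longleftrightarrow> (\<forall>P N. finite P \<longrightarrow> P \<subseteq> R \<longrightarrow> finite N \<longrightarrow>
      (\<exists>x. (\<forall>n\<in>N. T x n = 0) \<and> (\<forall>(a,b)\<in>P. x a = b)))" for R :: "('g \<times> 'b) set"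
  define W where "W h P N = {x h | x. (\<forall>n\<in>N. T x n = 0) \<and> (\<forall>(a,b)\<in>P. x a = b)}"
    for h and P :: "('g \<times> 'b) set" and N :: "'g set"
  define U where "U h P N = {x h | x. (\<forall>n\<in>N. T x n = 0) \<and> (\<forall>(a,b)\<in>P. x a = 0)}"
    for h and P :: "('g \<times> 'b) set" and N :: "'g set"
  have Usub: "subspace (U h P N)" for h P N
    unfolding subspace_def U_def
  proof (intro conjI ballI allI)
    show "0 \<in> {x h |x. (\<forall>n\<in>N. T x n = 0) \<and> (\<forall>(a, b)\<in>P. x a = 0)}"
      by (rule CollectI, rule exI[of _ 0]) (auto simp: T0)
  next
    fix u v assume "u \<in> {x h |x. (\<forall>n\<in>N. T x n = 0) \<and> (\<forall>(a, b)\<in>P. x a = 0)}"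
      "v \<in> {x h |x. (\<forall>n\<in>N. T x n = 0) \<and> (\<forall>(a, b)\<in>P. x a = 0)}"
    then obtain x y where "u = x h" "\<forall>n\<in>N. T x n = 0" "\<forall>(a, b)\<in>P. x a = 0"
      "v = y h" "\<forall>n\<in>N. T y n = 0" "\<forall>(a, b)\<in>P. y a = 0" by blast
    then show "u + v \<in> {x h |x. (\<forall>n\<in>N. T x n = 0) \<and> (\<forall>(a, b)\<in>P. x a = 0)}"
      by (intro CollectI exI[of _ "x + y"]) (fastforce simp: add)
  next
    fix c u assume "u \<in> {x h |x. (\<forall>n\<in>N. T x n = 0) \<and> (\<forall>(a, b)\<in>P. x a = 0)}"
    then obtain x where "u = x h" "\<forall>n\<in>N. T x n = 0" "\<forall>(a, b)\<in>P. x a = 0" by blast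
    then show "c *s u \<in> {x h |x. (\<forall>n\<in>N. T x n = 0) \<and> (\<forall>(a, b)\<in>P. x a = 0)}"
      by (intro CollectI exI[of _ "\<lambda>h. c *s x h"]) (fastforce simp: scl)
  qed
  have goodD: "\<exists>x. (\<forall>n\<in>N. T x n = 0) \<and> (\<forall>(a,b)\<in>P. x a = b)"
    if "good R" "finite P" "P \<subseteq> R" "finite N" for R P N
    using that unfolding good_def by blast
  have EXT: "\<exists>P0 N0. finite P0 \<and> P0 \<subseteq> R \<and> finite N0 \<and>
     (\<forall>P N. finite P \<longrightarrow> P \<subseteq> R \<longrightarrow> finite N \<longrightarrow> W h P0 N0 \<subseteq> W h P N)"
    if gR: "good R" for R h
  proof -
    obtain PN0 where PN0: "finite (fst PN0) \<and> fst PN0 \<subseteq> R \<and> finite (snd PN0)"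
      and minPN: "\<And>PN. finite (fst PN) \<and> fst PN \<subseteq> R \<and> finite (snd PN) \<Longrightarrow>
         dim (U h (fst PN0) (snd PN0)) \<le> dim (U h (fst PN) (snd PN))"
      using ex_has_least_nat[of "\<lambda>PN. finite (fst PN) \<and> fst PN \<subseteq> R \<and> finite (snd PN)" "({},{})"
          "\<lambda>PN. dim (U h (fst PN) (snd PN))"] by auto
    define P0 where "P0 = fst PN0"
    define N0 where "N0 = snd PN0"
    have P0: "finite P0" "P0 \<subseteq> R" "finite N0" using PN0 by (auto simp: P0_def N0_def)
    have minD: "dim (U h P0 N0) \<le> dim (U h P N)" if "finite P" "P \<subseteq> R" "finite N" for P N
      using minPN[of "(P,N)"] that by (auto simp: P0_def N0_def)
    show ?thesis
    proof (intro exI[of _ P0] exI[of _ N0] conjI allI impI)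
      fix P :: "('g \<times> 'b) set" and N :: "'g set" assume PN: "finite P" "P \<subseteq> R" "finite N"
      define P1 where "P1 = P0 \<union> P"
      define N1 where "N1 = N0 \<union> N"
      have P1: "finite P1" "P1 \<subseteq> R" "finite N1" using PN P0 by (auto simp: P1_def N1_def)
      have sub: "U h P1 N1 \<subseteq> U h P0 N0" unfolding U_def P1_def N1_def by blast
      have Ueq: "U h P1 N1 = U h P0 N0"
        using subspace_dim_equal[OF Usub Usub sub] minD[OF P1] by simp
      show "W h P0 N0 \<subseteq> W h P N"
      proof
        fix w assume "w \<in> W h P0 N0"
        then obtain x' where x': "w = x' h" "\<forall>n\<in>N0. T x' n = 0" "\<forall>(a,b)\<in>P0. x' a = b"
          unfolding W_def by blast
        obtain x'' where x'': "\<forall>n\<in>N1. T x'' n = 0" "\<forall>(a,b)\<in>P1. x'' a = b"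
          using goodD[OF gR P1] by blast
        have "(x' - x'') h \<in> U h P0 N0"
          unfolding U_def apply (rule CollectI, rule exI[of _ "x' - x''"])
          using x' x'' by (fastforce simp: Tdiff P1_def N1_def)
        then have "(x' - x'') h \<in> U h P1 N1" using Ueq by simp
        then obtain z where z: "(x' - x'') h = z h" "\<forall>n\<in>N1. T z n = 0" "\<forall>(a,b)\<in>P1. z a = 0"
          unfolding U_def by blast
        have e1: "w = (x'' + z) h" using z(1) x'(1) by (simp add: algebra_simps)
        have e2: "\<forall>n\<in>N. T (x''+z) n = 0" using x''(1) z(2) by (simp add: add N1_def)
        have e3: "\<forall>(a,b)\<in>P. (x''+z) a = b"
        proof (intro ballI, clarify)
          fix a b assume ab: "(a,b) \<in> P"
          then have "(a,b) \<in> P1" unfolding P1_def by blast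
          then have "x'' a = b" "z a = 0" using bspec[OF x''(2)] bspec[OF z(3)] by auto
          then show "(x''+z) a = b" by simp
        qed
        show "w \<in> W h P N" unfolding W_def using e1 e2 e3 by blast
      qed
    qed (use P0 in auto)
  qed
  have good0: "good {}" unfolding good_def by (auto intro: exI[of _ 0] simp: T0)
  obtain P0 N0 where PN0: "finite P0" "P0 \<subseteq> {}" "finite N0"
     and WW: "\<And>P N. finite P \<Longrightarrow> P \<subseteq> {} \<Longrightarrow> finite N \<Longrightarrow> W g0 P0 N0 \<subseteq> W g0 P N"
    using EXT[OF good0, of g0] by blast
  obtain x0 where x0: "\<forall>n\<in>N0. T x0 n = 0" "x0 g0 \<noteq> 0" using fail PN0 by blast
  define v where "v = x0 g0"
  have P00: "P0 = {}" using PN0 by auto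
  have "v \<in> W g0 P0 N0" unfolding W_def v_def P00 using x0(1) by blast
  then have vW: "v \<in> W g0 {} N" if "finite N" for N
    using WW[of "{}" N] that by blast
  define A where "A = {R. good R \<and> (g0, v) \<in> R}"
  have goodv: "good {(g0,v)}" unfolding good_def
  proof (intro allI impI)
    fix P :: "('g \<times> 'b) set" and N :: "'g set" assume "finite P" "P \<subseteq> {(g0, v)}" "finite N"
    then obtain x where "\<forall>n\<in>N. T x n = 0" "x g0 = v" using vW[of N] unfolding W_def by blast
    then show "\<exists>x. (\<forall>n\<in>N. T x n = 0) \<and> (\<forall>(a, b)\<in>P. x a = b)"
      using \<open>P \<subseteq> {(g0, v)}\<close> by blast
  qed
  have "\<exists>Rm\<in>A. \<forall>X\<in>A. Rm \<subseteq> X \<longrightarrow> X = Rm"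
  proof (rule subset_Zorn_nonempty)
    show "A \<noteq> {}" using goodv unfolding A_def by blast
  next
    fix C assume C: "C \<noteq> {}" "subset.chain A C"
    have "good (\<Union>C)" unfolding good_def
    proof (intro allI impI)
      fix P :: "('g \<times> 'b) set" and N :: "'g set" assume PN: "finite P" "P \<subseteq> \<Union>C" "finite N"
      obtain Bc where Bc: "Bc \<in> C" "P \<subseteq> Bc" using finite_subset_Union_chain[OF PN(1,2) C] .
      have "C \<subseteq> A" using C(2) unfolding subset.chain_def by blast
      then have gB: "good Bc" using Bc(1) unfolding A_def by blast
      show "\<exists>x. (\<forall>n\<in>N. T x n = 0) \<and> (\<forall>(a, b)\<in>P. x a = b)"
        using goodD[OF gB PN(1) Bc(2) PN(3)] .
    qed
    moreover have "(g0, v) \<in> \<Union>C"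
    proof -
      obtain R where R: "R \<in> C" using C(1) by blast
      have "C \<subseteq> A" using C(2) unfolding subset.chain_def by blast
      then have "(g0,v) \<in> R" using R unfolding A_def by blast
      then show ?thesis using R by blast
    qed
    ultimately show "\<Union>C \<in> A" unfolding A_def by blast
  qed
  then obtain Rm where Rm: "good Rm" "(g0,v) \<in> Rm"
    and maxR: "\<And>X. good X \<Longrightarrow> (g0,v) \<in> X \<Longrightarrow> Rm \<subseteq> X \<Longrightarrow> X = Rm"
    unfolding A_def by blast
  have total: "\<exists>b. (h,b) \<in> Rm" for h
  proof (rule ccontr)
    assume nh: "\<not> (\<exists>b. (h, b) \<in> Rm)"
    obtain P0 N0 where PN0: "finite P0" "P0 \<subseteq> Rm" "finite N0"
      and WW: "\<And>P N. finite P \<Longrightarrow> P \<subseteq> Rm \<Longrightarrow> finite N \<Longrightarrow> W h P0 N0 \<subseteq> W h P N"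
      using EXT[OF Rm(1), of h] by blast
    obtain x where "\<forall>n\<in>N0. T x n = 0" "\<forall>(a,b)\<in>P0. x a = b"
      using goodD[OF Rm(1) PN0] by blast
    then have wW: "x h \<in> W h P0 N0" unfolding W_def by blast
    define w where "w = x h"
    have "good (insert (h,w) Rm)" unfolding good_def
    proof (intro allI impI)
      fix P :: "('g \<times> 'b) set" and N :: "'g set" assume PN: "finite P" "P \<subseteq> insert (h,w) Rm" "finite N"
      have "w \<in> W h (P - {(h,w)}) N" using WW[of "P - {(h,w)}" N] PN wW unfolding w_def by blast
      then obtain y where y1: "w = y h" and y2: "\<forall>n\<in>N. T y n = 0"
          and y3: "\<forall>(a,b)\<in>P - {(h,w)}. y a = b"
        unfolding W_def by blast
      have "\<forall>(a,b)\<in>P. y a = b"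
      proof (intro ballI, clarify)
        fix a b assume ab: "(a,b) \<in> P"
        show "y a = b"
        proof (cases "(a,b) = (h,w)")
          case True then show ?thesis using y1 by simp
        next
          case False
          then have "(a,b) \<in> P - {(h,w)}" using ab by blast
          then show ?thesis using bspec[OF y3] by fastforce
        qed
      qed
      then show "\<exists>x. (\<forall>n\<in>N. T x n = 0) \<and> (\<forall>(a, b)\<in>P. x a = b)"
        using y2 by blast
    qed
    then have "insert (h,w) Rm = Rm" using maxR[OF _ _ subset_insertI] Rm(2) by blast
    then show False using nh by blast
  qed
  define y where "y h = (SOME b. (h,b) \<in> Rm)" for h
  have yR: "(h, y h) \<in> Rm" for h unfolding y_def using total[of h] by (metis someI_ex)
  have "T y g = 0" for g
  proof -
    have f1: "finite ((\<lambda>m. (g+m, y (g+m))) ` M)" using fM by simp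
    have f2: "(\<lambda>m. (g+m, y (g+m))) ` M \<subseteq> Rm" using yR by auto
    obtain x where "T x g = 0" "\<forall>(a,b)\<in>(\<lambda>m. (g+m, y (g+m))) ` M. x a = b"
      using goodD[OF Rm(1) f1 f2, of "{g}"] by auto
    then have "\<forall>m\<in>M. y (g+m) = x (g+m)" by auto
    then have "T y g = T x g" by (intro loc) simp
    then show ?thesis using \<open>T x g = 0\<close> by simp
  qed
  then have "T y = T 0" using T0 by auto
  then have "y = 0" using inj by (simp add: inj_eq)
  moreover have "y g0 = v"
  proof -
    have f1: "finite {(g0,v),(g0,y g0)}" by simp
    have f2: "{(g0,v),(g0,y g0)} \<subseteq> Rm" using Rm(2) yR[of g0] by simp
    obtain x where "\<forall>(a,b)\<in>{(g0,v),(g0,y g0)}. x a = b"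
      using goodD[OF Rm(1) f1 f2 finite.emptyI] by blast
    then show ?thesis by auto
  qed
  ultimately show False using x0 v_def by simp
qed

end

lemma vs_fscale:
  assumes "vector_space scale"
  shows "vector_space (fscale scale)"
  using assms unfolding vector_space_def fscale_def
  by (auto simp: fun_eq_iff)

lemma gact_gact: "gact a (gact b x) = gact (a + b) x"
  by (simp add: gact_def fun_eq_iff minus_add add.assoc[symmetric] diff_conv_add_uminus del: add_uminus_conv_diff)

lemma gact_zero[simp]: "gact 0 x = x"
  by (simp add: gact_def)

lemma restr_restr: "N \<subseteq> N' \<Longrightarrow> restr N (restr N' y) = restr N y"
  by (auto simp: restr_def fun_eq_iff)

lemma linmapsD:
  assumes "c \<in> linmaps scale M"
  shows "Vector_Spaces.linear (fscale scale) scale c" "c y = c (restr M y)"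
  using assms unfolding linmaps_def by auto

lemma linmaps_mono:
  assumes "c \<in> linmaps scale M" "M \<subseteq> N"
  shows "c \<in> linmaps scale N"
  using assms unfolding linmaps_def
  by (auto simp: restr_restr) (metis restr_restr)

lemma linear_addD: "Vector_Spaces.linear s1 s2 f \<Longrightarrow> f (x + y) = f x + f y"
  by (simp add: linear_iff)
lemma linear_scaleD: "Vector_Spaces.linear s1 s2 f \<Longrightarrow> f (s1 a x) = s2 a (f x)"
  by (simp add: linear_iff)

lemma sigma_add:
  assumes "\<forall>g. p g \<in> linmaps scale M"
  shows "sigma M p (x + y) g = sigma M p x g + sigma M p y g"
proof -
  have "restr M (gact (- g) (x + y)) = restr M (gact (- g) x) + restr M (gact (- g) y)"
    by (auto simp: restr_def gact_def fun_eq_iff)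
  then show ?thesis unfolding sigma_def
    using linear_addD[OF linmapsD(1)[OF assms[rule_format, of g]]] by simp
qed

lemma sigma_scale:
  assumes "\<forall>g. p g \<in> linmaps scale M" "vector_space scale"
  shows "sigma M p (\<lambda>h. scale a (x h)) g = scale a (sigma M p x g)"
proof -
  interpret vector_space scale by fact
  have "restr M (gact (- g) (\<lambda>h. scale a (x h))) = fscale scale a (restr M (gact (- g) x))"
    by (auto simp: restr_def gact_def fun_eq_iff fscale_def)
  then show ?thesis unfolding sigma_def
    using linear_scaleD[OF linmapsD(1)[OF assms(1)[rule_format, of g]]] by simp
qed

lemma sigma_loc:
  assumes "\<forall>m\<in>M. x (g+m) = y (g+m)"
  shows "sigma M p x g = sigma M p y g"
proof -
  have "restr M (gact (- g) x) = restr M (gact (- g) y)"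
    using assms by (auto simp: restr_def gact_def fun_eq_iff)
  then show ?thesis unfolding sigma_def by simp
qed

lemma sigma_linear:
  assumes "\<forall>g. p g \<in> linmaps scale M" "vector_space scale"
  shows "Vector_Spaces.linear (fscale scale) (fscale scale) (sigma M p)"
  unfolding linear_iff using vs_fscale[OF assms(2)] sigma_add[OF assms(1)] sigma_scale[OF assms]
  by (auto simp: fun_eq_iff fscale_def)

lemma restr_gact_linear:
  assumes "vector_space scale"
  shows "Vector_Spaces.linear (fscale scale) (fscale scale) (\<lambda>y. restr N (gact g y))"
proof -
  interpret vector_space scale by fact
  show ?thesis
  unfolding linear_iff using vs_fscale[OF assms]
  by (auto simp: fun_eq_iff fscale_def restr_def gact_def)
qed

lemma factor:
  assumes vs: "vector_space scale"
    and R: "Vector_Spaces.linear (fscale scale) (fscale scale) R"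
    and e: "Vector_Spaces.linear (fscale scale) scale e"
    and ker: "\<And>x. R x = 0 \<Longrightarrow> e x = 0"
  shows "\<exists>\<phi>. Vector_Spaces.linear (fscale scale) scale \<phi> \<and> (\<forall>x. \<phi> (R x) = e x)"
proof -
  have vf: "vector_space (fscale scale)" using vs_fscale[OF vs] .
  interpret vp: vector_space_pair "fscale scale" "fscale scale" using vf vf
    by (simp add: vector_space_pair_def)
  interpret vp2: vector_space_pair "fscale scale" scale using vf vs
    by (simp add: vector_space_pair_def)
  obtain g where g: "Vector_Spaces.linear (fscale scale) (fscale scale) g"
      "\<forall>v\<in>R ` UNIV. R (g v) = v"
    using vp.linear_exists_right_inverse_on[OF R vp.vs1.subspace_UNIV] by blast
  show ?thesis
  proof (intro exI conjI allI)
    show "Vector_Spaces.linear (fscale scale) scale (e \<circ> g)"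
      using Vector_Spaces.linear_compose[OF g(1) e] .
    fix x
    have "R (g (R x) - x) = 0" using g(2) vp.linear_diff[OF R] by simp
    then have "e (g (R x) - x) = 0" by (rule ker)
    then show "(e \<circ> g) (R x) = e x" using vp2.linear_diff[OF e] by simp
  qed
qed


lemma restr_linear:
  assumes "vector_space scale"
  shows "Vector_Spaces.linear (fscale scale) (fscale scale) (restr N)"
proof -
  interpret vector_space scale by fact
  show ?thesis
  unfolding linear_iff using vs_fscale[OF assms]
  by (auto simp: fun_eq_iff fscale_def restr_def)
qed

lemma locinv:
  assumes fd: "finite_dimensional_vector_space scale B"
   and fM: "finite M" and p: "\<forall>g. p g \<in> linmaps scale M" and inj: "inj (sigma M p)"
  shows "\<exists>N \<phi>. finite N \<and> \<phi> \<in> linmaps scale N \<and> (\<forall>x. \<phi> (restr N (gact (-g) (sigma M p x))) = x g)"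
proof -
  have vs: "vector_space scale" using fd by (simp add: finite_dimensional_vector_space_def)
  obtain N' where N': "finite N'" "\<forall>x. (\<forall>n\<in>N'. sigma M p x n = 0) \<longrightarrow> x g = 0"
    using finite_dimensional_vector_space.ker_local[OF fd sigma_add[OF p] sigma_scale[OF p vs]
        sigma_loc fM inj] by blast
  define N where "N = (\<lambda>h. -g + h) ` N'"
  define R where "R = (\<lambda>x. restr N (gact (-g) (sigma M p x)))"
  have Rlin: "Vector_Spaces.linear (fscale scale) (fscale scale) R"
    using Vector_Spaces.linear_compose[OF sigma_linear[OF p vs] restr_gact_linear[OF vs, of N "-g"]]
    by (simp add: R_def comp_def)
  have elin: "Vector_Spaces.linear (fscale scale) scale (\<lambda>x. x g)"
    unfolding linear_iff using vs vs_fscale[OF vs] by (simp add: fscale_def)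
  have ker: "x g = 0" if "R x = 0" for x
  proof -
    have "sigma M p x n = 0" if "n \<in> N'" for n
    proof -
      have "-g + n \<in> N" unfolding N_def using that by blast
      then have "R x (-g + n) = sigma M p x n"
        by (simp add: R_def restr_def gact_def add.assoc[symmetric])
      then show ?thesis using \<open>R x = 0\<close> by simp
    qed
    then show ?thesis using N'(2) by blast
  qed
  obtain \<phi>0 where \<phi>0: "Vector_Spaces.linear (fscale scale) scale \<phi>0" "\<forall>x. \<phi>0 (R x) = x g"
  proof -
    have "\<exists>\<phi>. Vector_Spaces.linear (fscale scale) scale \<phi> \<and> (\<forall>x. \<phi> (R x) = x g)"
      by (rule factor[OF vs Rlin elin]) (rule ker)
    then show ?thesis using that by blast
  qed
  define \<phi> where "\<phi> = \<phi>0 \<circ> restr N"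
  have "\<phi> \<in> linmaps scale N"
    unfolding linmaps_def \<phi>_def
    using Vector_Spaces.linear_compose[OF restr_linear[OF vs, of N] \<phi>0(1)]
    by (simp add: restr_restr)
  moreover have "\<phi> (restr N (gact (-g) (sigma M p x))) = x g" for x
    using \<phi>0(2) by (simp add: \<phi>_def R_def restr_restr)
  moreover have "finite N" using N'(1) by (simp add: N_def)
  ultimately show ?thesis by blast
qed

theorem theorem4p2:
  fixes scale :: "'k::field \<Rightarrow> 'v::ab_group_add \<Rightarrow> 'v"
    and \<tau> :: "('g::group_add \<Rightarrow> 'v) \<Rightarrow> ('g \<Rightarrow> 'v)"
  assumes "\<exists>B. finite_dimensional_vector_space scale B"
    and "\<tau> \<in> LNUCA_c scale"
    and "stably_injective scale \<tau>"
  shows "\<exists>\<sigma>\<in>LNUCA_c scale. \<sigma> \<circ> \<tau> = id"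
proof -
  obtain B where fd: "finite_dimensional_vector_space scale B" using assms(1) by blast
  have vs: "vector_space scale" using fd by (simp add: finite_dimensional_vector_space_def)
  obtain M s where fM: "finite M" and sM: "\<forall>g. s g \<in> linmaps scale M" and evs: "ev_const s"
     and tau: "\<tau> = sigma M s" and sinj: "\<forall>p\<in>orbit_closure s. inj (sigma M p)"
    using assms(3) unfolding stably_injective_def by blast
  obtain F c where fF: "finite F" and Fc: "\<forall>g. g \<notin> F \<longrightarrow> s g = c"
    using evs unfolding ev_const_def by blast
  have "s \<in> orbit_closure s" unfolding orbit_closure_def by (auto intro: exI[of _ 0])
  hence injs: "inj (sigma M s)" using sinj by blast
  obtain E N0 \<phi>c where fE: "finite E" and fN0: "finite N0" and \<phi>c: "\<phi>c \<in> linmaps scale N0"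
     and \<phi>cx: "\<forall>g. g \<notin> E \<longrightarrow> (\<forall>x. \<phi>c (restr N0 (gact (-g) (sigma M s x))) = x g)"
  proof (cases "finite (UNIV :: 'g set)")
    case True
    interpret vs: vector_space scale by (rule vs)
    have lin0: "Vector_Spaces.linear (fscale scale) scale (\<lambda>_. 0)"
      unfolding linear_iff using vs vs_fscale[OF vs] by simp
    show ?thesis
      by (rule that[of UNIV "{}" "\<lambda>_. 0"]) (auto simp: True linmaps_def lin0)
  next
    case False
    have "\<exists>g. g \<notin> F" using ex_new_if_finite[OF False fF] .
    then have cM: "c \<in> linmaps scale M" using sM Fc by metis
    define pc where "pc = (\<lambda>_::'g. c)"
    have "pc \<in> orbit_closure s" unfolding orbit_closure_def
    proof (intro CollectI allI impI)
      fix F' :: "'g set" assume "finite F'"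
      then have "finite ((\<lambda>(h,f). h + - f) ` (F' \<times> F))" using fF by auto
      then obtain g where g: "g \<notin> (\<lambda>(h,f). h + - f) ` (F' \<times> F)"
        using ex_new_if_finite[OF False] by blast
      show "\<exists>g. \<forall>h\<in>F'. pc h = gact g s h"
      proof (intro exI[of _ g] ballI)
        fix h assume hF: "h \<in> F'"
        have "-g + h \<notin> F"
        proof
          assume gh: "-g + h \<in> F"
          have "g = h + - (-g + h)" by (simp add: minus_add add.assoc)
          then have "g \<in> (\<lambda>(h,f). h + - f) ` (F' \<times> F)"
            using hF gh by (intro rev_image_eqI[of "(h, -g + h)"]) auto
          then show False using g by blast
        qed
        then show "pc h = gact g s h" using Fc by (simp add: pc_def gact_def)
      qed
    qed
    then have injc: "inj (sigma M pc)" using sinj by blast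
    have pcM: "\<forall>g. pc g \<in> linmaps scale M" using cM pc_def by simp
    obtain N0 \<phi>c where fN0: "finite N0" and \<phi>c: "\<phi>c \<in> linmaps scale N0"
      and \<phi>c0: "\<forall>x. \<phi>c (restr N0 (gact (-0) (sigma M pc x))) = x 0"
      using locinv[OF fd fM pcM injc, of 0] by blast
    have equi: "sigma M pc (gact a x) = gact a (sigma M pc x)" for a x
      by (simp add: sigma_def pc_def gact_gact fun_eq_iff) (simp add: gact_def minus_add)
    have allc: "\<phi>c (restr N0 (gact (-g) (sigma M pc x))) = x g" for g x
    proof -
      have "x g = gact (-g) x 0" by (simp add: gact_def)
      also have "\<dots> = \<phi>c (restr N0 (gact (-0) (sigma M pc (gact (-g) x))))" using \<phi>c0 by simp
      also have "\<dots> = \<phi>c (restr N0 (gact (-g) (sigma M pc x)))" by (simp add: equi)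
      finally show ?thesis by simp
    qed
    define E where "E = (\<lambda>(f,n). f + - n) ` (F \<times> N0)"
    have fE: "finite E" using fF fN0 by (simp add: E_def)
    have "\<forall>g. g \<notin> E \<longrightarrow> (\<forall>x. \<phi>c (restr N0 (gact (-g) (sigma M s x))) = x g)"
    proof (intro allI impI)
      fix g x assume gE: "g \<notin> E"
      have "restr N0 (gact (-g) (sigma M s x)) = restr N0 (gact (-g) (sigma M pc x))"
      proof (rule ext)
        fix h
        show "restr N0 (gact (-g) (sigma M s x)) h = restr N0 (gact (-g) (sigma M pc x)) h"
        proof (cases "h \<in> N0")
          case True
          have "g + h \<notin> F"
          proof
            assume "g + h \<in> F"
            then have "(g + h) + - h \<in> E" unfolding E_def using True by force
            then show False using gE by (simp add: add.assoc)
          qed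
          then have "s (g + h) = pc (g + h)" using Fc by (simp add: pc_def)
          then show ?thesis by (simp add: restr_def gact_def sigma_def)
        qed (simp add: restr_def)
      qed
      then show "\<phi>c (restr N0 (gact (-g) (sigma M s x))) = x g" using allc by simp
    qed
    then show ?thesis using that fE fN0 \<phi>c by blast
  qed
  have "\<forall>g\<in>E. \<exists>N \<phi>. finite N \<and> \<phi> \<in> linmaps scale N \<and> (\<forall>x. \<phi> (restr N (gact (-g) (sigma M s x))) = x g)"
    using locinv[OF fd fM sM injs] by blast
  then obtain Nf \<phi>f where Nf: "\<forall>g\<in>E. finite (Nf g) \<and> \<phi>f g \<in> linmaps scale (Nf g) \<and>
      (\<forall>x. \<phi>f g (restr (Nf g) (gact (-g) (sigma M s x))) = x g)"
    by metis
  define N where "N = N0 \<union> \<Union>(Nf ` E)"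
  define t where "t g = (if g \<in> E then \<phi>f g else \<phi>c)" for g
  have fN: "finite N" unfolding N_def using fN0 fE Nf by auto
  have tN: "t g \<in> linmaps scale N" for g
  proof (cases "g \<in> E")
    case True
    then show ?thesis unfolding t_def using Nf linmaps_mono[of "\<phi>f g" scale "Nf g" N]
      by (auto simp: N_def)
  next
    case False
    then show ?thesis unfolding t_def using \<phi>c linmaps_mono[of "\<phi>c" scale N0 N]
      by (auto simp: N_def)
  qed
  have evt: "ev_const t" unfolding ev_const_def t_def using fE
    by (intro exI[of _ E] exI[of _ \<phi>c]) auto
  have inv: "sigma N t (\<tau> x) = x" for x
  proof (rule ext)
    fix g
    have "sigma N t (\<tau> x) g = t g (gact (-g) (sigma M s x))"
      unfolding sigma_def tau using linmapsD(2)[OF tN[of g]] by metis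
    also have "\<dots> = x g"
    proof (cases "g \<in> E")
      case True
      have "\<phi>f g (gact (-g) (sigma M s x)) = \<phi>f g (restr (Nf g) (gact (-g) (sigma M s x)))"
        by (rule linmapsD(2)) (use Nf True in blast)
      then show ?thesis using Nf True by (simp add: t_def)
    next
      case False
      have "\<phi>c (gact (-g) (sigma M s x)) = \<phi>c (restr N0 (gact (-g) (sigma M s x)))"
        by (rule linmapsD(2)[OF \<phi>c])
      then show ?thesis using \<phi>cx False by (simp add: t_def)
    qed
    finally show "sigma N t (\<tau> x) g = x g" .
  qed
  have "sigma N t \<in> LNUCA_c scale"
    unfolding LNUCA_c_def using fN tN evt by blast
  moreover have "sigma N t \<circ> \<tau> = id" using inv by (simp add: fun_eq_iff)
  ultimately show ?thesis by blast
qed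


end
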